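(* Let $(\Omega,\mathcal A)$ be a Borel space, $(\Omega,X_\bullet)$ a Borel field of proper CAT(0) spaces, and $B_\bullet$ a Borel subfield such that $B_\omega$ is a non-empty bounded subset of $X_\omega$ for every $\omega$. Then (i) the circumradius function $\omega\mapsto r(B_\omega)$ is Borel, and (ii) the section of circumcenters $\omega\mapsto c_{B_\omega}$ is a Borel section of $(\Omega,X_\bullet)$.
   Context: Borel field of metric spaces: $(X_\omega,d_\omega)_{\omega\in\Omega}$ metric spaces; a section is $x_\bullet=(x_\omega)$, $x_\omega\in X_\omega$. A Borel structure is a set $\mathcal L(\Omega,X_\bullet)$ of sections such that (a) $\omega\mapsto d_\omega(x_\omega,y_\omega)$ is Borel for all $x_\bullet,y_\bullet\in\mathcal L$; (b) any section $y_\bullet$ with $\omega\mapsto d_\omega(x_\omega,y_\omega)$ Borel for all $x_\bullet\in\mathcal L$ lies in $\mathcal L$; (c) there is a countable $\mathcal D=\{x^n_\bullet\}\subseteq\mathcal L$ (fundamental family) with $\{x^n_\omega\}_n$ dense in $X_\omega$ for all $\omega$; elements of $\mathcal L$ are Borel sections. For Borel $\Omega'$, $\mathcal L(\Omega',X_\bullet)$ = restrictions to $\Omega'$ of Borel sections. A subfield is $A_\bullet=(A_\omega)$ with $A_\omega\subseteq X_\omega$; it is Borel if $\Omega'=\{\omega:A_\omega\ne\emptyset\}\in\mathcal A$ and there are countably many $y^n_\bullet\in\mathcal L(\Omega',X_\bullet)$ with $y^n_\omega\in A_\omega$ and $A_\omega\subseteq\overline{\{y^n_\omega\}_n}$ for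 all $\omega\in\Omega'$. For a non-empty bounded $B$ in a complete CAT(0) space $X$, the circumradius is $r(B)=\inf\{r>0\mid\exists x\in X,\ B\subseteq\overline B(x,r)\}$ and the circumcenter $c_B$ is the unique point with $B\subseteq\overline B(c_B,r(B))$. *)

theory Defs
  imports "HOL-Analysis.Analysis"
begin

definition geodesic_seg :: "'a metric \<Rightarrow> 'a \<Rightarrow> 'a \<Rightarrow> (real \<Rightarrow> 'a) \<Rightarrow> bool" where
  "geodesic_seg X x y \<gamma> \<longleftrightarrow>
     \<gamma> 0 = x \<and> \<gamma> (mdist X x y) = y \<and>
     (\<forall>s\<in>{0..mdist X x y}. \<gamma> s \<in> mspace X) \<and>
     (\<forall>s\<in>{0..mdist X x y}. \<forall>t\<in>{0..mdist X x y}. mdist X (\<gamma> s) (\<gamma> t) = \<bar>s - t\<bar>)"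

definition geodesic_space :: "'a metric \<Rightarrow> bool" where
  "geodesic_space X \<longleftrightarrow> (\<forall>x\<in>mspace X. \<forall>y\<in>mspace X. \<exists>\<gamma>. geodesic_seg X x y \<gamma>)"

text \<open>Points of the side [x,y] (parametrised by \<gamma>) paired with their comparison points
  on the Euclidean segment [xb,yb] of the comparison triangle.\<close>
definition side_pairs :: "'a metric \<Rightarrow> 'a \<Rightarrow> 'a \<Rightarrow> (real \<Rightarrow> 'a) \<Rightarrow> (real^2) \<Rightarrow> (real^2) \<Rightarrow> ('a \<times> (real^2)) set" where
  "side_pairs X x y \<gamma> xb yb =
     {(\<gamma> s, xb + (s / mdist X x y) *\<^sub>R (yb - xb)) | s. s \<in> {0..mdist X x y}}"

definition CAT0 :: "'a metric \<Rightarrow> bool" where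
  "CAT0 X \<longleftrightarrow> geodesic_space X \<and>
     (\<forall>x\<in>mspace X. \<forall>y\<in>mspace X. \<forall>z\<in>mspace X. \<forall>\<gamma>1 \<gamma>2 \<gamma>3 xb yb zb.
        geodesic_seg X x y \<gamma>1 \<and> geodesic_seg X y z \<gamma>2 \<and> geodesic_seg X z x \<gamma>3 \<and>
        dist xb yb = mdist X x y \<and> dist yb zb = mdist X y z \<and> dist zb xb = mdist X z x \<longrightarrow>
        (let T = side_pairs X x y \<gamma>1 xb yb \<union> side_pairs X y z \<gamma>2 yb zb \<union> side_pairs X z x \<gamma>3 zb xb
         in \<forall>(p, pb)\<in>T. \<forall>(q, qb)\<in>T. mdist X p q \<le> dist pb qb))"

definition proper_metric :: "'a metric \<Rightarrow> bool" where
  "proper_metric X \<longleftrightarrow> (\<forall>x\<in>mspace X. \<forall>r. compactin (mtopology_of X) (mcball_of X x r))"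

definition mbounded_of :: "'a metric \<Rightarrow> 'a set \<Rightarrow> bool" where
  "mbounded_of X S \<longleftrightarrow> Metric_space.mbounded (mspace X) (mdist X) S"

definition circumradius :: "'a metric \<Rightarrow> 'a set \<Rightarrow> real" where
  "circumradius X B = Inf {r. r > 0 \<and> (\<exists>x\<in>mspace X. B \<subseteq> mcball_of X x r)}"

definition circumcenter :: "'a metric \<Rightarrow> 'a set \<Rightarrow> 'a" where
  "circumcenter X B = (THE c. c \<in> mspace X \<and> B \<subseteq> mcball_of X c (circumradius X B))"

definition is_section :: "'w measure \<Rightarrow> ('w \<Rightarrow> 'a metric) \<Rightarrow> ('w \<Rightarrow> 'a) \<Rightarrow> bool" where
  "is_section M X x \<longleftrightarrow> (\<forall>\<omega>\<in>space M. x \<omega> \<in> mspace (X \<omega>))"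

definition borel_structure :: "'w measure \<Rightarrow> ('w \<Rightarrow> 'a metric) \<Rightarrow> ('w \<Rightarrow> 'a) set \<Rightarrow> bool" where
  "borel_structure M X L \<longleftrightarrow>
     (\<forall>x\<in>L. is_section M X x) \<and>
     (\<forall>x\<in>L. \<forall>y\<in>L. (\<lambda>\<omega>. mdist (X \<omega>) (x \<omega>) (y \<omega>)) \<in> borel_measurable M) \<and>
     (\<forall>y. is_section M X y \<and> (\<forall>x\<in>L. (\<lambda>\<omega>. mdist (X \<omega>) (x \<omega>) (y \<omega>)) \<in> borel_measurable M)
          \<longrightarrow> y \<in> L) \<and>
     (\<exists>D :: nat \<Rightarrow> ('w \<Rightarrow> 'a). (\<forall>n. D n \<in> L) \<and>
        (\<forall>\<omega>\<in>space M. mspace (X \<omega>) \<subseteq> mtopology_of (X \<omega>) closure_of (range (\<lambda>n. D n \<omega>))))"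

text \<open>Borel subfield: \<Omega>' = {\<omega>. A \<omega> \<noteq> {}} is measurable and there are countably many sections in
  L(\<Omega>', X) (restrictions to \<Omega>' of Borel sections) with values in A \<omega> that are dense in A \<omega>.\<close>
definition borel_subfield :: "'w measure \<Rightarrow> ('w \<Rightarrow> 'a metric) \<Rightarrow> ('w \<Rightarrow> 'a) set \<Rightarrow> ('w \<Rightarrow> 'a set) \<Rightarrow> bool" where
  "borel_subfield M X L A \<longleftrightarrow>
     (\<forall>\<omega>\<in>space M. A \<omega> \<subseteq> mspace (X \<omega>)) \<and>
     {\<omega>\<in>space M. A \<omega> \<noteq> {}} \<in> sets M \<and>
     (\<exists>y :: nat \<Rightarrow> ('w \<Rightarrow> 'a). (\<forall>n. \<exists>z\<in>L. \<forall>\<omega>\<in>{\<omega>\<in>space M. A \<omega> \<noteq> {}}. y n \<omega> = z \<omega>) \<and>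
        (\<forall>\<omega>\<in>{\<omega>\<in>space M. A \<omega> \<noteq> {}}.
           (\<forall>n. y n \<omega> \<in> A \<omega>) \<and> A \<omega> \<subseteq> mtopology_of (X \<omega>) closure_of (range (\<lambda>n. y n \<omega>))))"

end

theory Submission
  imports Defs
begin


lemma midpoint_euclid:
  fixes P Q R :: "'v::real_inner"
  shows "(dist ((1/2) *\<^sub>R (P+Q)) R)^2 = (dist P R)^2/2 + (dist Q R)^2/2 - (dist P Q)^2/4"
proof -
  have h: "(1/2) *\<^sub>R R + (1/2) *\<^sub>R R = R" by (metis field_sum_of_halves scaleR_add_left scaleR_one)
  have e: "(1/2) *\<^sub>R (P+Q) - R = (1/2) *\<^sub>R ((P - R) + (Q - R))"
    using h by (simp add: algebra_simps)
  have f: "P - Q = (P - R) - (Q - R)" by simp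
  show ?thesis unfolding dist_norm e f power2_norm_eq_inner
    apply (simp add: inner_add_left inner_add_right inner_diff_left inner_diff_right inner_commute algebra_simps)
    by (simp add: field_simps)
qed

lemma tri_exists:
  fixes a b c :: real
  assumes "0\<le>a" "0\<le>b" "0\<le>c" "a \<le> b+c" "b \<le> a+c" "c \<le> a+b"
  shows "\<exists>P Q R::real^2. dist P Q = a \<and> dist Q R = b \<and> dist R P = c"
proof -
  define e1 :: "real^2" where "e1 = axis 1 1"
  define e2 :: "real^2" where "e2 = axis 2 1"
  have n12: "(1::2) \<noteq> 2" by simp
  have nrm: "norm (u *\<^sub>R e1 + v *\<^sub>R e2) = sqrt (u^2 + v^2)" for u v
    unfolding norm_eq_sqrt_inner e1_def e2_def
    using n12 by (simp add: inner_add_left inner_add_right inner_axis_axis power2_eq_square)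
  show ?thesis
  proof (cases "a = 0")
    case True
    then have bc: "b = c" using assms by linarith
    show ?thesis
      apply (rule exI[of _ 0], rule exI[of _ 0], rule exI[of _ "c *\<^sub>R e1 + 0 *\<^sub>R e2"])
      using nrm[of c 0] True bc assms by (simp add: dist_norm)
  next
    case False
    then have apos: "a > 0" using assms by simp
    define u where "u = (a^2 + c^2 - b^2) / (2*a)"
    have ua: "2*a*u = a^2+c^2-b^2" unfolding u_def using apos by simp
    have key: "(a^2+c^2-b^2)^2 \<le> (2*a*c)^2"
    proof -
      have "(2*a*c)^2 - (a^2+c^2-b^2)^2 = (b^2-(a-c)^2)*((a+c)^2-b^2)" by (simp add: algebra_simps power2_eq_square)
      moreover have "b^2-(a-c)^2 \<ge> 0" using assms by (simp add: abs_le_square_iff[symmetric] abs_le_iff) 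
      moreover have "(a+c)^2-b^2 \<ge> 0" using assms by (simp add: abs_le_square_iff[symmetric] abs_le_iff)
      ultimately show ?thesis by (metis diff_ge_0_iff_ge zero_le_mult_iff)
    qed
    have uc: "u^2 \<le> c^2"
    proof -
      have "(2*a*u)^2 \<le> (2*a*c)^2" using key ua by simp
      then have "(2*a)^2 * u^2 \<le> (2*a)^2 * c^2" by (simp add: power_mult_distrib)
      then show ?thesis using apos by simp
    qed
    define v where "v = sqrt (c^2 - u^2)"
    have v2: "v^2 = c^2 - u^2" unfolding v_def using uc by simp
    show ?thesis
    proof (intro exI conjI)
      show "dist 0 (a *\<^sub>R e1 + 0 *\<^sub>R e2) = a" using nrm[of a 0] apos by (simp add: dist_norm)
      have "(u *\<^sub>R e1 + v *\<^sub>R e2) - 0 = u *\<^sub>R e1 + v *\<^sub>R e2" by simp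
      then show "dist (u *\<^sub>R e1 + v *\<^sub>R e2) 0 = c" using nrm[of u v] v2 assms by (simp add: dist_norm)
      have eqv: "a *\<^sub>R e1 + 0 *\<^sub>R e2 - (u *\<^sub>R e1 + v *\<^sub>R e2) = (a - u) *\<^sub>R e1 + (- v) *\<^sub>R e2"
        by (simp add: algebra_simps)
      have "(a-u)^2 + (-v)^2 = b^2" using v2 ua by (simp add: algebra_simps power2_eq_square)
      then show "dist (a *\<^sub>R e1 + 0 *\<^sub>R e2) (u *\<^sub>R e1 + v *\<^sub>R e2) = b"
        unfolding dist_norm eqv nrm using assms by simp
    qed
  qed
qed



lemma CN:
  assumes cat: "CAT0 X" and p: "p \<in> mspace X" and q: "q \<in> mspace X"
  shows "\<exists>m\<in>mspace X. \<forall>b\<in>mspace X. (mdist X b m)^2 \<le> (mdist X b p)^2/2 + (mdist X b q)^2/2 - (mdist X p q)^2/4"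
proof -
  have geo: "geodesic_space X" using cat unfolding CAT0_def by blast
  obtain \<gamma> where g: "geodesic_seg X p q \<gamma>" using geo p q unfolding geodesic_space_def by blast
  define d where "d = mdist X p q"
  define m where "m = \<gamma> (d/2)"
  have d0: "d \<ge> 0" unfolding d_def by simp
  have mM: "m \<in> mspace X" using g d0 unfolding geodesic_seg_def m_def d_def by auto
  show ?thesis
  proof (intro bexI[OF _ mM] ballI)
    fix b assume b: "b \<in> mspace X"
    obtain \<gamma>2 where g2: "geodesic_seg X q b \<gamma>2" using geo q b unfolding geodesic_space_def by blast
    obtain \<gamma>3 where g3: "geodesic_seg X b p \<gamma>3" using geo b p unfolding geodesic_space_def by blast
    have t1: "mdist X p q \<le> mdist X q b + mdist X b p"
      using mdist_triangle[OF p b q] by (simp add: mdist_commute)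
    have t2: "mdist X q b \<le> mdist X p q + mdist X b p"
      using mdist_triangle[OF q p b] by (simp add: mdist_commute)
    have t3: "mdist X b p \<le> mdist X p q + mdist X q b"
      using mdist_triangle[OF b q p] by (simp add: mdist_commute)
    obtain pb qb bb :: "real^2" where tri: "dist pb qb = mdist X p q" "dist qb bb = mdist X q b" "dist bb pb = mdist X b p"
      using tri_exists[OF mdist_nonneg mdist_nonneg mdist_nonneg t1 t2 t3] by blast
    define T where "T = side_pairs X p q \<gamma> pb qb \<union> side_pairs X q b \<gamma>2 qb bb \<union> side_pairs X b p \<gamma>3 bb pb"
    have comp: "\<forall>(p', pb')\<in>T. \<forall>(q', qb')\<in>T. mdist X p' q' \<le> dist pb' qb'"
      using cat p q b g g2 g3 tri unfolding CAT0_def T_def Let_def by blast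
    define mb where "mb = pb + ((d/2) / mdist X p q) *\<^sub>R (qb - pb)"
    have in1: "(m, mb) \<in> T" unfolding T_def side_pairs_def m_def mb_def using d0 d_def by auto
    have in2: "(b, bb) \<in> T"
    proof -
      have "(\<gamma>3 0, bb + (0 / mdist X b p) *\<^sub>R (pb - bb)) \<in> side_pairs X b p \<gamma>3 bb pb"
        unfolding side_pairs_def by (auto intro!: exI[of _ 0])
      moreover have "\<gamma>3 0 = b" using g3 unfolding geodesic_seg_def by simp
      ultimately show "(b, bb) \<in> T"
        unfolding T_def by simp
    qed
    have le: "mdist X m b \<le> dist mb bb" using comp in1 in2 by blast
    have mbe: "mb = (1/2) *\<^sub>R (pb + qb)"
    proof (cases "d = 0")
      case True
      then have "pb = qb" using tri(1) d_def by simp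
      then show ?thesis unfolding mb_def using True d_def
        by (simp add: scaleR_add_right[symmetric])
    next
      case False
      have h: "(1/2) *\<^sub>R pb + (1/2) *\<^sub>R pb = pb" by (metis field_sum_of_halves scaleR_add_left scaleR_one)
      show ?thesis unfolding mb_def using False d_def h by (simp add: algebra_simps)
    qed
    have "(mdist X b m)^2 \<le> (dist mb bb)^2"
      using le by (simp add: mdist_commute power_mono)
    also have "\<dots> = (dist pb bb)^2/2 + (dist qb bb)^2/2 - (dist pb qb)^2/4"
      unfolding mbe by (rule midpoint_euclid)
    also have "\<dots> = (mdist X b p)^2/2 + (mdist X b q)^2/2 - (mdist X p q)^2/4"
      using tri by (simp add: dist_commute mdist_commute)
    finally show "(mdist X b m)^2 \<le> (mdist X b p)^2/2 + (mdist X b q)^2/2 - (mdist X p q)^2/4" .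
  qed
qed



lemma closure_near:
  assumes "p \<in> mtopology_of X closure_of S" "e > 0"
  shows "\<exists>s\<in>S. s \<in> mspace X \<and> mdist X p s < e"
proof -
  interpret Metric_space "mspace X" "mdist X" by simp
  show ?thesis using assms unfolding mtopology_of_def metric_closure_of by auto
qed

locale ccore =
  fixes X :: "'a metric" and B :: "'a set" and y :: "nat \<Rightarrow> 'a" and D :: "nat \<Rightarrow> 'a"
  assumes cat: "CAT0 X" and prp: "proper_metric X"
    and yB: "\<And>n. y n \<in> B" and BM: "B \<subseteq> mspace X"
    and Bcl: "B \<subseteq> mtopology_of X closure_of range y"
    and Bne: "B \<noteq> {}" and Bbdd: "mbounded_of X B"
    and DM: "\<And>k. D k \<in> mspace X" and Dcl: "mspace X \<subseteq> mtopology_of X closure_of range D"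
begin

definition f where "f p = (SUP n. mdist X p (y n))"
definition R where "R = (INF k. f (D k))"

lemma yM: "y n \<in> mspace X" using yB BM by auto

lemma bdd_y: assumes p: "p \<in> mspace X" shows "bdd_above (range (\<lambda>n. mdist X p (y n)))"
proof -
  interpret Metric_space "mspace X" "mdist X" by simp
  obtain y0 K where y0: "y0 \<in> mspace X" and K: "\<forall>x\<in>B. mdist X y0 x \<le> K"
    using Bbdd Bne unfolding mbounded_of_def mbounded by blast
  have "mdist X p (y n) \<le> mdist X p y0 + K" for n
    using mdist_triangle[OF p y0 yM[of n]] K yB[of n] by force
  then show ?thesis by (intro bdd_aboveI) auto
qed

lemma f_upper: "p \<in> mspace X \<Longrightarrow> mdist X p (y n) \<le> f p"
  unfolding f_def using bdd_y by (intro cSUP_upper) auto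

lemma f_least: "(\<And>n. mdist X p (y n) \<le> K) \<Longrightarrow> f p \<le> K"
  unfolding f_def by (intro cSUP_least) auto

lemma f_nonneg: "p \<in> mspace X \<Longrightarrow> 0 \<le> f p"
  using f_upper[of p 0] mdist_nonneg[of X p "y 0"] by linarith

lemma f_lip: assumes p: "p \<in> mspace X" and q: "q \<in> mspace X" shows "f p \<le> f q + mdist X p q"
proof (rule f_least)
  fix n show "mdist X p (y n) \<le> f q + mdist X p q"
    using mdist_triangle[OF p q yM[of n]] f_upper[OF q, of n] by linarith
qed

lemma f_B: assumes p: "p \<in> mspace X" and b: "b \<in> B" shows "mdist X p b \<le> f p"
proof (rule field_le_epsilon)
  fix e :: real assume e: "e > 0"
  have "b \<in> mtopology_of X closure_of range y" using Bcl b by (rule subsetD)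
  from closure_near[OF this e] obtain s where "s \<in> range y" "mdist X b s < e" by blast
  then obtain n where n: "mdist X b (y n) < e" by blast
  have bM: "b \<in> mspace X" using BM b by (rule subsetD)
  have "mdist X p b \<le> mdist X p (y n) + mdist X (y n) b" by (rule mdist_triangle[OF p yM bM])
  moreover have "mdist X (y n) b = mdist X b (y n)" by (rule mdist_commute)
  moreover note f_upper[OF p, of n]
  ultimately show "mdist X p b \<le> f p + e" using n by linarith
qed

lemma ball_iff: assumes p: "p \<in> mspace X" shows "B \<subseteq> mcball_of X p r \<longleftrightarrow> f p \<le> r"
proof
  assume "B \<subseteq> mcball_of X p r"
  then have "\<And>n. mdist X p (y n) \<le> r" using yB by (meson in_mcball_of subsetD)
  then show "f p \<le> r" by (rule f_least)
next
  assume "f p \<le> r"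
  then show "B \<subseteq> mcball_of X p r" using f_B[OF p] p BM by (meson in_mcball_of order_trans subsetD subsetI)
qed

lemma bdd_R: "bdd_below (range (\<lambda>k. f (D k)))"
  using f_nonneg DM by (intro bdd_belowI[of _ 0]) auto

lemma R_lower: "R \<le> f (D k)" unfolding R_def using bdd_R by (intro cINF_lower) auto

lemma R_nonneg: "0 \<le> R" unfolding R_def using f_nonneg DM by (intro cINF_greatest) auto

lemma R_le: assumes p: "p \<in> mspace X" shows "R \<le> f p"
proof (rule field_le_epsilon)
  fix e :: real assume e: "e > 0"
  have "p \<in> mtopology_of X closure_of range D" using Dcl p by (rule subsetD)
  from closure_near[OF this e] obtain s where "s \<in> range D" "mdist X p s < e" by blast
  then obtain k where k: "mdist X p (D k) < e" by blast
  have "mdist X (D k) p = mdist X p (D k)" by (rule mdist_commute)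
  then show "R \<le> f p + e" using R_lower[of k] f_lip[OF DM[of k] p] k by linarith
qed

lemma R_approx: assumes "e > 0" shows "\<exists>k. f (D k) < R + e"
proof -
  have "R < R + e" using assms by simp
  then show ?thesis using cINF_less_iff[OF _ bdd_R, of "R + e"] unfolding R_def by auto
qed

lemma exists_c: "\<exists>c\<in>mspace X. f c \<le> R"
proof -
  interpret Metric_space "mspace X" "mdist X" by simp
  have "\<forall>n. \<exists>k. f (D k) < R + inverse (real (Suc n))" using R_approx by simp
  then obtain kk where kk: "\<And>n. f (D (kk n)) < R + inverse (real (Suc n))" by metis
  define \<sigma> where "\<sigma> n = D (kk n)" for n
  obtain b0 where b0: "b0 \<in> B" using Bne by blast
  have b0M: "b0 \<in> mspace X" using BM b0 by (rule subsetD)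
  define \<rho> where "\<rho> = R + 1 + f (D 0)"
  have inb: "\<sigma> n \<in> mcball_of X (D 0) \<rho>" for n
  proof -
    have "mdist X (D 0) (\<sigma> n) \<le> mdist X (D 0) b0 + mdist X b0 (\<sigma> n)"
      by (rule mdist_triangle[OF DM b0M]) (simp add: \<sigma>_def DM)
    moreover have "mdist X (D 0) b0 \<le> f (D 0)" by (rule f_B[OF DM b0])
    moreover have "mdist X b0 (\<sigma> n) \<le> f (\<sigma> n)" using f_B[OF _ b0, of "\<sigma> n"] DM
      by (simp add: \<sigma>_def mdist_commute)
    moreover have "f (\<sigma> n) \<le> R + 1" using kk[of n] unfolding \<sigma>_def
      by (smt (verit) inverse_le_1_iff of_nat_0_le_iff of_nat_Suc)
    ultimately show ?thesis using DM unfolding \<rho>_def \<sigma>_def by simp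
  qed
  have cpt: "compactin mtopology (mcball (D 0) \<rho>)"
    using prp DM unfolding proper_metric_def mtopology_of_def mcball_of_def by blast
  have "range \<sigma> \<subseteq> mcball (D 0) \<rho>" using inb unfolding mcball_of_def by auto
  then obtain l r where l: "l \<in> mcball (D 0) \<rho>" and r: "strict_mono r"
    and lim: "limitin mtopology (\<sigma> \<circ> r) l sequentially"
    using cpt unfolding compactin_sequentially by blast
  have lM: "l \<in> mspace X" using l by auto
  have conv: "\<forall>e>0. \<exists>N. \<forall>n\<ge>N. (\<sigma> \<circ> r) n \<in> mspace X \<and> mdist X ((\<sigma> \<circ> r) n) l < e"
    using lim unfolding limit_metric_sequentially by blast
  have "f l \<le> R"
  proof (rule field_le_epsilon)
    fix e :: real assume e: "e > 0"
    obtain N where N: "\<And>n. n \<ge> N \<Longrightarrow> mdist X ((\<sigma> \<circ> r) n) l < e/2" using conv e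
      by (metis half_gt_zero)
    obtain K where K: "K > 0" "inverse (real K) < e/2" using ex_inverse_of_nat_less[of "e/2"] e by auto
    define n where "n = max N K"
    have rn: "r n \<ge> K" using seq_suble[OF r, of n] unfolding n_def by simp
    have "inverse (real (Suc (r n))) \<le> inverse (real K)"
      using rn K(1) by (simp add: le_imp_inverse_le)
    moreover have "f (\<sigma> (r n)) < R + inverse (real (Suc (r n)))" unfolding \<sigma>_def by (rule kk)
    moreover have "f l \<le> f (\<sigma> (r n)) + mdist X l (\<sigma> (r n))"
      by (rule f_lip[OF lM]) (simp add: \<sigma>_def DM)
    moreover have "mdist X l (\<sigma> (r n)) < e/2" using N[of n] unfolding n_def
      by (simp add: mdist_commute)
    ultimately show "f l \<le> R + e" using K(2) by linarith
  qed
  then show ?thesis using lM by blast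
qed

lemma key:
  assumes c: "c \<in> mspace X" "f c \<le> R" and p: "p \<in> mspace X"
  shows "(mdist X p c)^2 \<le> 2*((f p)^2 - R^2)"
proof -
  obtain m where mM: "m \<in> mspace X" and m: "\<And>b. b \<in> mspace X \<Longrightarrow>
      (mdist X b m)^2 \<le> (mdist X b p)^2/2 + (mdist X b c)^2/2 - (mdist X p c)^2/4"
    using CN[OF cat p c(1)] by blast
  define Q where "Q = (f p)^2/2 + R^2/2 - (mdist X p c)^2/4"
  have Qn: "(mdist X m (y n))^2 \<le> Q" for n
  proof -
    have a: "mdist X (y n) p \<le> f p" using f_upper[OF p, of n] by (simp add: mdist_commute)
    have b: "mdist X (y n) c \<le> R" using f_upper[OF c(1), of n] c(2) by (simp add: mdist_commute)
    have "(mdist X (y n) p)^2 \<le> (f p)^2" using a by (simp add: power_mono)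
    moreover have "(mdist X (y n) c)^2 \<le> R^2" using b by (simp add: power_mono)
    moreover note m[OF yM[of n]]
    ultimately show ?thesis unfolding Q_def by (simp add: mdist_commute)
  qed
  have Q0: "0 \<le> Q" using Qn[of 0] by (smt (verit) zero_le_power2)
  have "f m \<le> sqrt Q" by (rule f_least) (rule real_le_rsqrt[OF Qn])
  then have "R \<le> sqrt Q" using R_le[OF mM] by linarith
  then have "R^2 \<le> (sqrt Q)^2" using R_nonneg by (simp add: power_mono)
  then have "R^2 \<le> Q" using Q0 by simp
  then show ?thesis unfolding Q_def by simp
qed

lemma radius: "circumradius X B = R"
proof -
  obtain c where c: "c \<in> mspace X" "f c \<le> R" using exists_c by blast
  have "{r. r > 0 \<and> (\<exists>x\<in>mspace X. B \<subseteq> mcball_of X x r)} = {r. r > 0 \<and> R \<le> r}"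
  proof (intro Collect_cong iffI)
    fix r assume h: "0 < r \<and> (\<exists>x\<in>mspace X. B \<subseteq> mcball_of X x r)"
    then obtain x where x: "x \<in> mspace X" "B \<subseteq> mcball_of X x r" by blast
    have "f x \<le> r" using ball_iff[OF x(1)] x(2) by simp
    then show "0 < r \<and> R \<le> r" using h R_le[OF x(1)] by auto
  next
    fix r assume h: "0 < r \<and> R \<le> r"
    then have "B \<subseteq> mcball_of X c r" using c ball_iff[OF c(1)] by simp
    then show "0 < r \<and> (\<exists>x\<in>mspace X. B \<subseteq> mcball_of X x r)" using c h by blast
  qed
  moreover have "Inf {r. r > 0 \<and> R \<le> r} = R"
  proof (cases "R = 0")
    case True
    then have "{r. r > 0 \<and> R \<le> r} = {0<..}" by auto
    then show ?thesis using True by simp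
  next
    case False
    then have "{r. r > 0 \<and> R \<le> r} = {R..}" using R_nonneg by auto
    then show ?thesis by simp
  qed
  ultimately show ?thesis unfolding circumradius_def by simp
qed

lemma center: "circumcenter X B \<in> mspace X \<and> f (circumcenter X B) \<le> R"
proof -
  obtain c where c: "c \<in> mspace X" "f c \<le> R" using exists_c by blast
  have "circumcenter X B = c"
    unfolding circumcenter_def radius
  proof (rule the_equality)
    show "c \<in> mspace X \<and> B \<subseteq> mcball_of X c R" using c ball_iff by auto
  next
    fix c' assume h: "c' \<in> mspace X \<and> B \<subseteq> mcball_of X c' R"
    then have "f c' \<le> R" using ball_iff by auto
    then have "(f c')^2 \<le> R^2" using f_nonneg h by (simp add: power_mono)
    moreover have "(mdist X c' c)^2 \<le> 2*((f c')^2 - R^2)" using key[OF c, of c'] h by simp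
    ultimately have "(mdist X c' c)^2 \<le> 0" by (smt (verit))
    then have "mdist X c' c = 0" by simp
    then show "c' = c" using h c by simp
  qed
  then show ?thesis using c by simp
qed

lemma dist_formula:
  assumes x: "x \<in> mspace X"
  shows "mdist X x (circumcenter X B) = (INF j. mdist X x (D j) + sqrt (2*((f (D j))^2 - R^2)))"
proof -
  define c where "c = circumcenter X B"
  have c: "c \<in> mspace X" "f c \<le> R" using center unfolding c_def by auto
  define t where "t j = mdist X x (D j) + sqrt (2*((f (D j))^2 - R^2))" for j
  have lower: "mdist X x c \<le> t j" for j
  proof -
    have "mdist X (D j) c \<le> sqrt (2*((f (D j))^2 - R^2))"
      by (rule real_le_rsqrt[OF key[OF c DM]])
    then show ?thesis using mdist_triangle[OF x DM[of j] c(1)] unfolding t_def by linarith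
  qed
  have bdd: "bdd_below (range t)" using lower by (intro bdd_belowI) auto
  have "(INF j. t j) \<le> mdist X x c"
  proof (rule field_le_epsilon)
    fix e :: real assume e: "e > 0"
    define \<delta> where "\<delta> = min 1 (min (e/2) (e^2 / (8*(2*R+1))))"
    have R0: "0 \<le> R" by (rule R_nonneg)
    have d0: "\<delta> > 0" unfolding \<delta>_def using e R0 by auto
    have cc: "c \<in> mtopology_of X closure_of range D" using Dcl c(1) by (rule subsetD)
    from closure_near[OF cc d0] obtain s where "s \<in> range D" "mdist X c s < \<delta>" by blast
    then obtain j where j: "mdist X c (D j) < \<delta>" by blast
    define d' where "d' = mdist X c (D j)"
    have d'0: "0 \<le> d'" unfolding d'_def by simp
    have fj: "f (D j) \<le> R + d'" using f_lip[OF DM c(1), of j] c(2) unfolding d'_def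
      by (simp add: mdist_commute)
    have fjR: "R \<le> f (D j)" by (rule R_lower)
    have "(f (D j))^2 \<le> (R + d')^2" using fj fjR R0 by (simp add: power_mono)
    then have "(f (D j))^2 - R^2 \<le> 2*R*d' + d'^2" by (simp add: power2_eq_square algebra_simps)
    also have "\<dots> \<le> (2*R+1)*d'"
    proof -
      have "d' \<le> 1" using j d'_def \<delta>_def by simp
      then have "d'^2 \<le> d'" unfolding power2_eq_square using mult_left_le_one_le[OF d'0 d'0] by blast
      then show ?thesis by (simp add: algebra_simps)
    qed
    also have "\<dots> \<le> (2*R+1) * (e^2 / (8*(2*R+1)))"
    proof -
      have "d' \<le> e^2 / (8*(2*R+1))" using j d'_def \<delta>_def by simp
      then show ?thesis using R0 by (intro mult_left_mono) auto
    qed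
    also have "\<dots> = e^2/8"
    proof -
      have "2*R+1 \<noteq> 0" using R0 by simp
      then show ?thesis by (simp add: field_simps)
    qed
    finally have "2*((f (D j))^2 - R^2) \<le> (e/2)^2" by (simp add: power_divide)
    then have sq: "sqrt (2*((f (D j))^2 - R^2)) \<le> e/2" using e by (intro real_le_lsqrt) auto
    have "d' < e/2" using j d'_def \<delta>_def by simp
    moreover have "mdist X x (D j) \<le> mdist X x c + d'"
      unfolding d'_def by (rule mdist_triangle[OF x c(1) DM])
    ultimately have "t j < mdist X x c + e" using sq unfolding t_def by linarith
    moreover have "(INF j. t j) \<le> t j" using bdd by (rule cINF_lower) simp
    ultimately show "(INF j. t j) \<le> mdist X x c + e" by linarith
  qed
  moreover have "mdist X x c \<le> (INF j. t j)" using lower by (intro cINF_greatest) auto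
  ultimately show ?thesis unfolding t_def c_def by linarith
qed

lemma explicit:
  "circumradius X B = (INF k. SUP n. mdist X (D k) (y n)) \<and> circumcenter X B \<in> mspace X \<and>
   (\<forall>x\<in>mspace X. mdist X x (circumcenter X B) =
     (INF j. mdist X x (D j) + sqrt (2*((SUP n. mdist X (D j) (y n))^2 - (INF k. SUP n. mdist X (D k) (y n))^2))))
   \<and> (\<forall>k. bdd_above (range (\<lambda>n. mdist X (D k) (y n))))"
  using radius center dist_formula bdd_y DM unfolding R_def f_def by auto

end


lemma meas_SUP:
  fixes g :: "nat \<Rightarrow> 'w \<Rightarrow> real"
  assumes "\<And>n. g n \<in> borel_measurable M" "\<And>\<omega>. \<omega> \<in> space M \<Longrightarrow> bdd_above (range (\<lambda>n. g n \<omega>))"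
  shows "(\<lambda>\<omega>. SUP n. g n \<omega>) \<in> borel_measurable M"
  by (rule borel_measurable_cSUP) (use assms in auto)

lemma meas_INF:
  fixes g :: "nat \<Rightarrow> 'w \<Rightarrow> real"
  assumes "\<And>n. g n \<in> borel_measurable M"
  shows "(\<lambda>\<omega>. INF n. g n \<omega>) \<in> borel_measurable M"
  by (rule borel_measurable_cINF_real) (use assms in auto)

theorem mainTheorem8:
  fixes M :: "'w measure" and X :: "'w \<Rightarrow> 'a metric" and L :: "('w \<Rightarrow> 'a) set"
    and B :: "'w \<Rightarrow> 'a set"
  assumes field: "borel_structure M X L"
    and proper: "\<forall>\<omega>\<in>space M. proper_metric (X \<omega>) \<and> CAT0 (X \<omega>)"
    and subfield: "borel_subfield M X L B"
    and ne_bdd: "\<forall>\<omega>\<in>space M. B \<omega> \<noteq> {} \<and> mbounded_of (X \<omega>) (B \<omega>)"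
  shows "(\<lambda>\<omega>. circumradius (X \<omega>) (B \<omega>)) \<in> borel_measurable M \<and>
         (\<lambda>\<omega>. circumcenter (X \<omega>) (B \<omega>)) \<in> L"
proof -
  have sec: "\<And>x. x \<in> L \<Longrightarrow> is_section M X x"
    and Lmeas: "\<And>x x'. x \<in> L \<Longrightarrow> x' \<in> L \<Longrightarrow> (\<lambda>\<omega>. mdist (X \<omega>) (x \<omega>) (x' \<omega>)) \<in> borel_measurable M"
    and Lclos: "\<And>y. is_section M X y \<Longrightarrow> (\<forall>x\<in>L. (\<lambda>\<omega>. mdist (X \<omega>) (x \<omega>) (y \<omega>)) \<in> borel_measurable M) \<Longrightarrow> y \<in> L"
    using field unfolding borel_structure_def by blast+
  obtain D :: "nat \<Rightarrow> 'w \<Rightarrow> 'a" where DL: "\<And>n. D n \<in> L"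
    and Dcl: "\<And>\<omega>. \<omega> \<in> space M \<Longrightarrow> mspace (X \<omega>) \<subseteq> mtopology_of (X \<omega>) closure_of (range (\<lambda>n. D n \<omega>))"
    using field unfolding borel_structure_def by blast
  have Bsub: "\<And>\<omega>. \<omega> \<in> space M \<Longrightarrow> B \<omega> \<subseteq> mspace (X \<omega>)" using subfield unfolding borel_subfield_def by blast
  have Om: "{\<omega>\<in>space M. B \<omega> \<noteq> {}} = space M" using ne_bdd by auto
  obtain y :: "nat \<Rightarrow> 'w \<Rightarrow> 'a" where
      yz: "\<And>n. \<exists>z\<in>L. \<forall>\<omega>\<in>space M. y n \<omega> = z \<omega>"
    and yB: "\<And>\<omega> n. \<omega> \<in> space M \<Longrightarrow> y n \<omega> \<in> B \<omega>"
    and ycl: "\<And>\<omega>. \<omega> \<in> space M \<Longrightarrow> B \<omega> \<subseteq> mtopology_of (X \<omega>) closure_of (range (\<lambda>n. y n \<omega>))"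
    using subfield unfolding borel_subfield_def Om by blast
  obtain z where zL: "\<And>n. z n \<in> L" and yzeq: "\<And>n \<omega>. \<omega> \<in> space M \<Longrightarrow> y n \<omega> = z n \<omega>"
    using yz by metis
  have DM: "\<And>\<omega> k. \<omega> \<in> space M \<Longrightarrow> D k \<omega> \<in> mspace (X \<omega>)"
    using sec[OF DL] unfolding is_section_def by blast
  have core: "ccore (X \<omega>) (B \<omega>) (\<lambda>n. z n \<omega>) (\<lambda>k. D k \<omega>)" if w: "\<omega> \<in> space M" for \<omega>
  proof -
    have eq: "(\<lambda>n. y n \<omega>) = (\<lambda>n. z n \<omega>)" using yzeq w by auto
    show ?thesis
      using proper w yB[OF w] ycl[OF w] eq Bsub[OF w] ne_bdd DM[OF w] Dcl[OF w]
      unfolding ccore_def by (metis (no_types, lifting))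
  qed
  note ex = ccore.explicit[OF core]
  define Sf where "Sf k \<omega> = (SUP n. mdist (X \<omega>) (D k \<omega>) (z n \<omega>))" for k \<omega>
  define Rf where "Rf \<omega> = (INF k. Sf k \<omega>)" for \<omega>
  have Sm: "Sf k \<in> borel_measurable M" for k
    unfolding Sf_def by (rule meas_SUP) (use Lmeas[OF DL zL] ex in auto)
  have Rm: "Rf \<in> borel_measurable M" unfolding Rf_def by (rule meas_INF) (rule Sm)
  have part1: "(\<lambda>\<omega>. circumradius (X \<omega>) (B \<omega>)) \<in> borel_measurable M"
    using Rm by (rule measurable_cong[THEN iffD1, rotated]) (use ex in \<open>auto simp: Rf_def Sf_def\<close>)
  have part2: "(\<lambda>\<omega>. circumcenter (X \<omega>) (B \<omega>)) \<in> L"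
  proof (rule Lclos)
    show "is_section M X (\<lambda>\<omega>. circumcenter (X \<omega>) (B \<omega>))" unfolding is_section_def using ex by blast
    show "\<forall>x\<in>L. (\<lambda>\<omega>. mdist (X \<omega>) (x \<omega>) (circumcenter (X \<omega>) (B \<omega>))) \<in> borel_measurable M"
    proof
      fix x assume x: "x \<in> L"
      have xM: "\<And>\<omega>. \<omega> \<in> space M \<Longrightarrow> x \<omega> \<in> mspace (X \<omega>)" using sec[OF x] unfolding is_section_def by blast
      have m: "(\<lambda>\<omega>. INF j. mdist (X \<omega>) (x \<omega>) (D j \<omega>) + sqrt (2*((Sf j \<omega>)^2 - (Rf \<omega>)^2))) \<in> borel_measurable M"
      proof (rule meas_INF)
        fix j
        have [measurable]: "(\<lambda>\<omega>. mdist (X \<omega>) (x \<omega>) (D j \<omega>)) \<in> borel_measurable M" by (rule Lmeas[OF x DL])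
        have [measurable]: "Sf j \<in> borel_measurable M" by (rule Sm)
        note [measurable] = Rm
        show "(\<lambda>\<omega>. mdist (X \<omega>) (x \<omega>) (D j \<omega>) + sqrt (2*((Sf j \<omega>)^2 - (Rf \<omega>)^2))) \<in> borel_measurable M"
          by measurable
      qed
      show "(\<lambda>\<omega>. mdist (X \<omega>) (x \<omega>) (circumcenter (X \<omega>) (B \<omega>))) \<in> borel_measurable M"
        using m by (rule measurable_cong[THEN iffD1, rotated]) (use ex xM in \<open>auto simp: Rf_def Sf_def\<close>)
    qed
  qed
  show ?thesis using part1 part2 by blast
qed

end
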